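(* Let $T$ be a tree with $k$ vertices and $t:=\sigma(T)-1$. Let $\mathcal{H}$ be a $3$-graph on vertex set $V$, let $S_1,S_2\subseteq V$ be two distinct $t$-subsets, and let $V_1,V_2\subseteq V\setminus(S_1\cup S_2)$ be two sets with $V_1\cap V_2\ne\emptyset$. Suppose there are graphs $G_1$ on $V_1$ and $G_2$ on $V_2$ such that for each $i\in\{1,2\}$: (i) $d_{G_i}(v)\ge 3k$ for all $v\in V_i$, and (ii) $G_i\subseteq L_{\mathcal{H}}(v)$ for all $v\in S_i$. Then $\mathcal{H}$ contains a copy of $T^3$.
   Context: For a graph $F$, $|F|$ is its number of edges and $F-I$ the subgraph induced on $V(F)\setminus I$; $\sigma(F)=\min\{|I|+|F-I| : I\text{ independent in }F\}$. For a $3$-graph $\mathcal{H}$, the link of a vertex $v$ is the graph $L_{\mathcal{H}}(v)=\{uw: uvw\in\mathcal{H}\}$. The expansion $T^3$ is the $3$-graph obtained from $T$ by adding to each edge a new vertex, distinct edges receiving distinct new vertices. *)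

theory Defs
  imports Main
begin

definition graph_on :: "'a set \<Rightarrow> 'a set set \<Rightarrow> bool" where
  "graph_on VF EF \<longleftrightarrow> finite VF \<and> (\<forall>e\<in>EF. e \<subseteq> VF \<and> card e = 2)"

definition degree :: "'a set set \<Rightarrow> 'a \<Rightarrow> nat" where
  "degree EF v = card {e \<in> EF. v \<in> e}"

definition connected_graph :: "'a set \<Rightarrow> 'a set set \<Rightarrow> bool" where
  "connected_graph VF EF \<longleftrightarrow>
     (\<forall>x\<in>VF. \<forall>y\<in>VF. (x, y) \<in> {(u, w). {u, w} \<in> EF}\<^sup>*)"

definition has_cycle :: "'a set set \<Rightarrow> bool" where
  "has_cycle EF \<longleftrightarrow> (\<exists>cs. length cs \<ge> 3 \<and> distinct cs \<and>
     (\<forall>i < length cs - 1. {cs ! i, cs ! (i + 1)} \<in> EF) \<and> {last cs, hd cs} \<in> EF)"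

definition is_tree :: "'a set \<Rightarrow> 'a set set \<Rightarrow> bool" where
  "is_tree VF EF \<longleftrightarrow> graph_on VF EF \<and> VF \<noteq> {} \<and> connected_graph VF EF \<and> \<not> has_cycle EF"

definition independent :: "'a set set \<Rightarrow> 'a set \<Rightarrow> bool" where
  "independent EF I \<longleftrightarrow> (\<forall>e\<in>EF. \<not> e \<subseteq> I)"

text \<open>|F - I|: number of edges of the subgraph induced on V(F) minus I.\<close>
definition edges_outside :: "'a set set \<Rightarrow> 'a set \<Rightarrow> nat" where
  "edges_outside EF I = card {e \<in> EF. e \<inter> I = {}}"

definition sigma :: "'a set \<Rightarrow> 'a set set \<Rightarrow> nat" where
  "sigma VF EF = Min {card I + edges_outside EF I | I. I \<subseteq> VF \<and> independent EF I}"

definition hypergraph3_on :: "'b set \<Rightarrow> 'b set set \<Rightarrow> bool" where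
  "hypergraph3_on V H \<longleftrightarrow> (\<forall>e\<in>H. e \<subseteq> V \<and> card e = 3)"

definition link :: "'b set set \<Rightarrow> 'b \<Rightarrow> 'b set set" where
  "link H v = {{u, w} | u w. {u, v, w} \<in> H}"

text \<open>Expansion T^3: vertices Inl x for x in V(T), new vertex Inr e for each edge e.\<close>
definition expansion_vertices :: "'a set \<Rightarrow> 'a set set \<Rightarrow> ('a + 'a set) set" where
  "expansion_vertices VF EF = Inl ` VF \<union> Inr ` EF"

definition expansion_edges :: "'a set set \<Rightarrow> ('a + 'a set) set set" where
  "expansion_edges EF = {insert (Inr e) (Inl ` e) | e. e \<in> EF}"

definition contains_copy :: "'b set \<Rightarrow> 'b set set \<Rightarrow> 'c set \<Rightarrow> 'c set set \<Rightarrow> bool" where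
  "contains_copy V H W F \<longleftrightarrow>
     (\<exists>f. inj_on f W \<and> f ` W \<subseteq> V \<and> (\<forall>e\<in>F. f ` e \<in> H))"

end

theory Submission
  imports Defs
begin


definition wk :: "'a set set \<Rightarrow> 'a list \<Rightarrow> bool" where
  "wk E cs \<longleftrightarrow> (\<forall>i < length cs - 1. {cs ! i, cs ! (i + 1)} \<in> E)"

lemma wk_append1:
  assumes "wk E cs" "cs \<noteq> []" "{last cs, x} \<in> E"
  shows "wk E (cs @ [x])"
  unfolding wk_def
proof (intro allI impI)
  fix i assume i: "i < length (cs @ [x]) - 1"
  show "{(cs @ [x]) ! i, (cs @ [x]) ! (i + 1)} \<in> E"
  proof (cases "i < length cs - 1")
    case True
    then have "Suc i < length cs" by simp
    then show ?thesis using True assms(1) unfolding wk_def by (simp add: nth_append)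
  next
    case False
    then have "i = length cs - 1" using i by simp
    then show ?thesis using assms(2,3) by (simp add: nth_append last_conv_nth)
  qed
qed

lemma wk_take: "wk E cs \<Longrightarrow> wk E (take n cs)"
  unfolding wk_def by auto

lemma wk_drop: "wk E cs \<Longrightarrow> wk E (drop n cs)"
  unfolding wk_def by (auto simp: add.commute add.left_commute)

lemma wk_Cons: "wk E cs \<Longrightarrow> cs \<noteq> [] \<Longrightarrow> {x, hd cs} \<in> E \<Longrightarrow> wk E (x # cs)"
  unfolding wk_def
  apply (intro allI impI)
  subgoal for i by (cases i) (auto simp: hd_conv_nth)
  done

lemma wk_mono: "E \<subseteq> E' \<Longrightarrow> wk E cs \<Longrightarrow> wk E' cs"
  unfolding wk_def by auto

lemma walk_of_rtrancl:
  assumes "(a, b) \<in> {(x, y). {x, y} \<in> E}\<^sup>*"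
  shows "\<exists>cs. cs \<noteq> [] \<and> hd cs = a \<and> last cs = b \<and> distinct cs \<and> wk E cs"
  using assms
proof (induction rule: rtrancl_induct)
  case base
  then show ?case by (rule exI[of _ "[a]"]) (simp add: wk_def)
next
  case (step y x)
  then obtain cs where cs: "cs \<noteq> []" "hd cs = a" "last cs = y" "distinct cs" "wk E cs" by blast
  show ?case
  proof (cases "x \<in> set cs")
    case True
    then obtain j where j: "j < length cs" "cs ! j = x" by (auto simp: in_set_conv_nth)
    show ?thesis
      apply (rule exI[of _ "take (Suc j) cs"])
      using j cs by (auto simp: wk_take last_conv_nth hd_conv_nth min_def intro: arg_cong[where f="(!) cs"])
  next
    case False
    show ?thesis
      apply (rule exI[of _ "cs @ [x]"])
      using cs False step(2) by (auto simp: wk_append1 hd_append)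
  qed
qed

lemma has_cycle_wk: "has_cycle EF \<longleftrightarrow> (\<exists>cs. length cs \<ge> 3 \<and> distinct cs \<and> wk EF cs \<and> {last cs, hd cs} \<in> EF)"
  unfolding has_cycle_def wk_def by simp

lemma edge_card: "graph_on VF EF \<Longrightarrow> {a, b} \<in> EF \<Longrightarrow> a \<noteq> b \<and> a \<in> VF \<and> b \<in> VF"
  unfolding graph_on_def by (cases "a = b") auto

lemma leaf_exists:
  assumes T: "is_tree VT ET" and z: "z \<in> VT" and c2: "2 \<le> card VT"
  shows "\<exists>v u. v \<in> VT \<and> v \<noteq> z \<and> {u, v} \<in> ET \<and> (\<forall>y. {v, y} \<in> ET \<longrightarrow> y = u)"
proof -
  have g: "graph_on VT ET" and fin: "finite VT" and con: "connected_graph VT ET" and nc: "\<not> has_cycle ET"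
    using T unfolding is_tree_def graph_on_def by auto
  obtain x where x: "x \<in> VT" "x \<noteq> z"
  proof -
    have "VT - {z} \<noteq> {}" using c2 z fin
      by (metis Diff_empty Diff_insert0 One_nat_def card.empty card_Suc_Diff1 not_less_eq_eq numeral_2_eq_2 zero_le)
    then show ?thesis using that by blast
  qed
  have "(z, x) \<in> {(u, w). {u, w} \<in> ET}\<^sup>*" using con z x unfolding connected_graph_def by blast
  then obtain y0 where y0: "{z, y0} \<in> ET" using x(2) by (auto elim: converse_rtranclE)
  define Pth where "Pth cs \<longleftrightarrow> cs \<noteq> [] \<and> hd cs = z \<and> distinct cs \<and> set cs \<subseteq> VT \<and> wk ET cs" for cs
  define P where "P n \<longleftrightarrow> (\<exists>cs. Pth cs \<and> length cs = n)" for n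
  have "Pth [z, y0]" unfolding Pth_def wk_def using edge_card[OF g y0] y0 by auto
  then have P2: "P 2" unfolding P_def by force
  have bnd: "\<forall>n. P n \<longrightarrow> n \<le> card VT"
    unfolding P_def Pth_def using fin by (metis card_mono distinct_card)
  obtain n where n: "P n" "\<forall>m. P m \<longrightarrow> m \<le> n" using Nat.ex_has_greatest_nat[OF P2 bnd] by blast
  then obtain cs where cs: "Pth cs" "length cs = n" unfolding P_def by blast
  have n2: "n \<ge> 2" using n P2 by blast
  have csd: "cs \<noteq> []" "hd cs = z" "distinct cs" "set cs \<subseteq> VT" "wk ET cs" using cs(1) unfolding Pth_def by auto
  define v where "v = last cs"
  define u where "u = cs ! (n - 2)"
  have vn: "v = cs ! (n - 1)" unfolding v_def using csd(1) cs(2) by (simp add: last_conv_nth)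
  have hz: "cs ! 0 = z" using csd(1,2) by (simp add: hd_conv_nth)
  have vz: "v \<noteq> z"
  proof
    assume "v = z"
    then have "cs ! (n - 1) = cs ! 0" using vn hz by simp
    then show False using csd(3) cs(2) n2 by (simp add: nth_eq_iff_index_eq)
  qed
  have vV: "v \<in> VT" using csd(4) csd(1) unfolding v_def by auto
  have uv: "{u, v} \<in> ET"
  proof -
    have a: "n - 2 < length cs - 1" "n - 2 + 1 = n - 1" using n2 cs(2) by arith+
    show ?thesis using csd(5) a unfolding wk_def u_def vn by metis
  qed
  have "\<forall>y. {v, y} \<in> ET \<longrightarrow> y = u"
  proof (intro allI impI)
    fix y assume vy: "{v, y} \<in> ET"
    have yV: "y \<in> VT" and yv: "y \<noteq> v" using edge_card[OF g vy] by auto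
    show "y = u"
    proof (cases "y \<in> set cs")
      case False
      have "Pth (cs @ [y])" unfolding Pth_def using csd False yV vy
        by (auto simp: wk_append1 v_def)
      then have "P (Suc n)" unfolding P_def using cs(2) by (intro exI[of _ "cs @ [y]"]) simp
      then show ?thesis using n(2) by fastforce
    next
      case True
      then obtain i where i: "i < n" "cs ! i = y" using cs(2) by (auto simp: in_set_conv_nth)
      have "i \<noteq> n - 1" using i yv vn by auto
      moreover have "\<not> i < n - 2"
      proof
        assume il: "i < n - 2"
        have "has_cycle ET" unfolding has_cycle_wk
        proof (intro exI conjI)
          show "3 \<le> length (drop i cs)" using il cs(2) by simp
          show "distinct (drop i cs)" using csd(3) by simp
          show "wk ET (drop i cs)" using csd(5) by (rule wk_drop)
          have "last (drop i cs) = v" unfolding v_def using i cs(2) by simp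
          moreover have "hd (drop i cs) = y" using i cs(2) by (simp add: hd_drop_conv_nth)
          ultimately show "{last (drop i cs), hd (drop i cs)} \<in> ET" using vy by simp
        qed
        then show False using nc by simp
      qed
      ultimately have "i = n - 2" using i by linarith
      then show ?thesis using i u_def by simp
    qed
  qed
  then show ?thesis using vV vz uv by blast
qed


lemma edge_with_leaf:
  assumes g: "graph_on VT ET" and e: "e \<in> ET" "v \<in> e" and lf: "\<forall>y. {v, y} \<in> ET \<longrightarrow> y = u"
  shows "e = {u, v}"
proof -
  obtain a b where ab: "e = {a, b}" "a \<noteq> b" using g e unfolding graph_on_def by (meson card_2_iff)
  show ?thesis
  proof (cases "a = v")
    case True
    then show ?thesis using lf e ab by auto
  next
    case False
    then have "b = v" using ab e by auto
    then show ?thesis using lf e ab by (auto simp: insert_commute)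
  qed
qed

lemma tree_remove_leaf:
  assumes T: "is_tree VT ET" and v: "v \<in> VT" and uv: "{u, v} \<in> ET"
    and lf: "\<forall>y. {v, y} \<in> ET \<longrightarrow> y = u"
  shows "is_tree (VT - {v}) (ET - {{u, v}})"
proof -
  have g: "graph_on VT ET" and fin: "finite VT" and con: "connected_graph VT ET" and nc: "\<not> has_cycle ET"
    using T unfolding is_tree_def graph_on_def by auto
  have uvd: "u \<noteq> v" "u \<in> VT" using edge_card[OF g uv] by auto
  have ev: "\<forall>e \<in> ET - {{u, v}}. v \<notin> e" using edge_with_leaf[OF g _ _ lf] by blast
  have g': "graph_on (VT - {v}) (ET - {{u, v}})" using g ev unfolding graph_on_def by blast
  have nc': "\<not> has_cycle (ET - {{u, v}})" using nc unfolding has_cycle_def by blast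
  let ?R = "{(a, b). {a, b} \<in> ET}"
  let ?R' = "{(a, b). {a, b} \<in> ET - {{u, v}}}"
  have key: "(x, y) \<in> ?R\<^sup>* \<Longrightarrow> x \<noteq> v \<Longrightarrow> (y \<noteq> v \<longrightarrow> (x, y) \<in> ?R'\<^sup>*) \<and> (y = v \<longrightarrow> (x, u) \<in> ?R'\<^sup>*)" for x y
  proof (induction rule: rtrancl_induct)
    case base
    then show ?case by simp
  next
    case (step y z)
    have yz: "{y, z} \<in> ET" using step(2) by simp
    show ?case
    proof (cases "y = v")
      case True
      then have "z = u" using lf yz by simp
      then show ?thesis using step True uvd by auto
    next
      case False
      show ?thesis
      proof (cases "z = v")
        case True
        then have "y = u" using lf yz by (simp add: insert_commute)
        then show ?thesis using step False True by auto
      next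
        case zv: False
        then have "{y, z} \<in> ET - {{u, v}}" using yz False by auto
        then have "(y, z) \<in> ?R'" by simp
        then show ?thesis using step False zv by (meson rtrancl.rtrancl_into_rtrancl)
      qed
    qed
  qed
  have "connected_graph (VT - {v}) (ET - {{u, v}})"
    unfolding connected_graph_def
  proof (intro ballI)
    fix x y assume "x \<in> VT - {v}" "y \<in> VT - {v}"
    then show "(x, y) \<in> ?R'\<^sup>*" using key con unfolding connected_graph_def by blast
  qed
  then show ?thesis using g' nc' uvd unfolding is_tree_def by blast
qed


definition items :: "'a set set \<Rightarrow> 'a set \<Rightarrow> ('a + 'a set) set" where
  "items ET I = Inl ` I \<union> Inr ` {e \<in> ET. e \<inter> I = {}}"

lemma fresh_nb:
  assumes g: "graph_on VV GG" and x: "x \<in> VV" and d: "degree GG x \<ge> 3 * k"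
    and X: "finite X" "card X < 3 * k"
  shows "\<exists>y. {x, y} \<in> GG \<and> y \<notin> X \<and> y \<in> VV"
proof (rule ccontr)
  assume na: "\<not> ?thesis"
  define N where "N = {y \<in> VV. {x, y} \<in> GG}"
  have finV: "finite VV" using g unfolding graph_on_def by simp
  have "{e \<in> GG. x \<in> e} \<subseteq> (\<lambda>y. {x, y}) ` N"
  proof
    fix e assume e: "e \<in> {e \<in> GG. x \<in> e}"
    then obtain a b where ab: "e = {a, b}" "a \<noteq> b" proof -
      have "card e = 2" using g e unfolding graph_on_def by blast
      then show ?thesis using that by (auto simp: card_2_iff)
    qed
    have sub: "e \<subseteq> VV" using g e unfolding graph_on_def by blast
    show "e \<in> (\<lambda>y. {x, y}) ` N"
    proof (cases "a = x")
      case True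
      then show ?thesis using ab e sub unfolding N_def by auto
    next
      case False
      then have "b = x" using ab e by auto
      then show ?thesis using ab e sub unfolding N_def by (auto simp: insert_commute)
    qed
  qed
  moreover have finN: "finite N" unfolding N_def using finV by simp
  ultimately have "card {e \<in> GG. x \<in> e} \<le> card ((\<lambda>y. {x, y}) ` N)" by (intro card_mono) auto
  also have "\<dots> \<le> card N" using finN by (rule card_image_le)
  finally have "degree GG x \<le> card N" unfolding degree_def .
  moreover have "N \<subseteq> X" using na unfolding N_def by blast
  then have "card N \<le> card X" using X by (simp add: card_mono)
  ultimately show False using d X by linarith
qed

lemma link_ins: "{a, c} \<in> link H s \<Longrightarrow> insert s {a, c} \<in> H"
  unfolding link_def
proof -
  assume "{a, c} \<in> {{u, w} |u w. {u, s, w} \<in> H}"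
  then obtain u w where uw: "{a, c} = {u, w}" "{u, s, w} \<in> H" by blast
  have "{u, s, w} = insert s {u, w}" by auto
  then show ?thesis using uw by simp
qed


locale setting =
  fixes H :: "'b set set" and S1 S2 V1 V2 :: "'b set" and G1 G2 :: "'b set set" and k :: nat
  assumes disj: "V1 \<inter> (S1 \<union> S2) = {}" "V2 \<inter> (S1 \<union> S2) = {}"
    and Gg: "graph_on V1 G1" "graph_on V2 G2"
    and dg: "\<forall>v\<in>V1. degree G1 v \<ge> 3 * k" "\<forall>v\<in>V2. degree G2 v \<ge> 3 * k"
    and lk: "\<forall>v\<in>S1. G1 \<subseteq> link H v" "\<forall>v\<in>S2. G2 \<subseteq> link H v"
begin

definition Vof :: "bool \<Rightarrow> 'b set" where "Vof b = (if b then V2 else V1)"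
definition Sof :: "bool \<Rightarrow> 'b set" where "Sof b = (if b then S2 else S1)"
definition Gof :: "bool \<Rightarrow> 'b set set" where "Gof b = (if b then G2 else G1)"

lemma fresh:
  assumes "x \<in> Vof b" "finite X" "card X < 3 * k"
  shows "\<exists>y. {x, y} \<in> Gof b \<and> y \<notin> X \<and> y \<in> Vof b"
  using assms fresh_nb[OF Gg(1), of x k X] fresh_nb[OF Gg(2), of x k X] dg
  unfolding Vof_def Gof_def by (cases b) auto

lemma linkof: "s \<in> Sof b \<Longrightarrow> {a, c} \<in> Gof b \<Longrightarrow> insert s {a, c} \<in> H"
  using lk link_ins[of a c H s] unfolding Sof_def Gof_def by (cases b) auto

lemma SV: "s \<in> Sof b \<Longrightarrow> s \<notin> V1 \<union> V2"
  using disj unfolding Sof_def by (cases b) auto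

end




context setting begin

lemma core:
  fixes VT :: "'a set" and ET :: "'a set set" and I :: "'a set"
  assumes "is_tree VT ET" "card VT \<le> k" "I \<subseteq> VT" "independent ET I" "z \<in> VT" "z \<notin> I"
    and w: "w \<in> V1" "w \<in> V2" and zB: "z \<notin> B"
    and Bc: "\<forall>x y. {x, y} \<in> ET \<longrightarrow> x \<noteq> z \<longrightarrow> y \<noteq> z \<longrightarrow> (x \<in> B \<longleftrightarrow> y \<in> B)"
    and "inj_on g (items ET I)"
    and "\<forall>u\<in>I. g (Inl u) \<in> Sof (u \<in> B)"
    and "\<forall>e\<in>ET. e \<inter> I = {} \<longrightarrow> g (Inr e) \<in> Sof (e \<inter> B \<noteq> {})"
  shows "\<exists>f. inj_on f (expansion_vertices VT ET)
     \<and> f ` expansion_vertices VT ET \<subseteq> g ` items ET I \<union> V1 \<union> V2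
     \<and> (\<forall>e\<in>ET. f ` insert (Inr e) (Inl ` e) \<in> H) \<and> f (Inl z) = w
     \<and> (\<forall>x\<in>VT - I. x \<noteq> z \<longrightarrow> f (Inl x) \<in> Vof (x \<in> B))
     \<and> (\<forall>u\<in>I. f (Inl u) = g (Inl u)) \<and> card ET + 1 = card VT"
  using assms(1-6,10-)
proof (induction "card VT" arbitrary: VT ET I rule: less_induct)
  case less
  have g: "graph_on VT ET" and fin: "finite VT"
    using less.prems unfolding is_tree_def graph_on_def by auto
  have finE: "finite ET"
  proof -
    have "ET \<subseteq> Pow VT" using g unfolding graph_on_def by blast
    then show ?thesis using fin by (meson finite_Pow_iff finite_subset)
  qed
  show ?case
  proof (cases "card VT \<ge> 2")
    case False
    moreover have "card VT \<noteq> 0" using less.prems(5) fin by auto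
    ultimately have "card VT = 1" by linarith
    then have VT: "VT = {z}" using less.prems(5) card_1_singleton_iff[of VT] by auto
    have ET: "ET = {}"
    proof (rule ccontr)
      assume "ET \<noteq> {}"
      then obtain e where e: "e \<in> ET" by blast
      then have "e \<subseteq> {z}" "card e = 2" using g VT unfolding graph_on_def by auto
      then have "card e \<le> card {z}" by (intro card_mono) auto
      then show False using \<open>card e = 2\<close> by simp
    qed
    have I: "I = {}" using less.prems(3,6) VT by blast
    show ?thesis
      apply (rule exI[of _ "\<lambda>_. w"])
      using VT ET I w by (auto simp: expansion_vertices_def)
  next
    case True
    obtain v u where v: "v \<in> VT" "v \<noteq> z" and uv: "{u, v} \<in> ET" and lf: "\<forall>y. {v, y} \<in> ET \<longrightarrow> y = u"
      using leaf_exists[OF less.prems(1,5) True] by blast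
    have uvd: "u \<noteq> v" "u \<in> VT" using edge_card[OF g uv] by auto
    define e where "e = {u, v}"
    define VT' where "VT' = VT - {v}"
    define ET' where "ET' = ET - {e}"
    define I' where "I' = I - {v}"
    have T': "is_tree VT' ET'" unfolding VT'_def ET'_def e_def using tree_remove_leaf[OF less.prems(1) v(1) uv lf] .
    have ev: "\<forall>e' \<in> ET'. v \<notin> e'" using edge_with_leaf[OF g _ _ lf] unfolding ET'_def e_def by blast
    have cV: "card VT' < card VT" unfolding VT'_def using v fin by (meson card_Diff1_less)
    have ind': "independent ET' I'" using less.prems(4) unfolding independent_def ET'_def I'_def by blast
    have it: "items ET' I' \<subseteq> items ET I"
      using ev unfolding items_def I'_def ET'_def by blast
    have IH: "\<exists>f. inj_on f (expansion_vertices VT' ET')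
     \<and> f ` expansion_vertices VT' ET' \<subseteq> g ` items ET' I' \<union> V1 \<union> V2
     \<and> (\<forall>e\<in>ET'. f ` insert (Inr e) (Inl ` e) \<in> H) \<and> f (Inl z) = w
     \<and> (\<forall>x\<in>VT' - I'. x \<noteq> z \<longrightarrow> f (Inl x) \<in> Vof (x \<in> B))
     \<and> (\<forall>u\<in>I'. f (Inl u) = g (Inl u)) \<and> card ET' + 1 = card VT'"
    proof (rule less.hyps[OF cV T'])
      show "card VT' \<le> k" using cV less.prems(2) by simp
      show "I' \<subseteq> VT'" using less.prems(3) unfolding I'_def VT'_def by blast
      show "independent ET' I'" by (rule ind')
      show "z \<in> VT'" "z \<notin> I'" using less.prems(5,6) v(2) unfolding VT'_def I'_def by auto
      show "\<forall>x y. {x, y} \<in> ET' \<longrightarrow> x \<noteq> z \<longrightarrow> y \<noteq> z \<longrightarrow> (x \<in> B) = (y \<in> B)"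
        using less.prems(7) unfolding ET'_def by blast
      show "inj_on g (items ET' I')" using less.prems(8) it by (rule inj_on_subset)
      show "\<forall>u\<in>I'. g (Inl u) \<in> Sof (u \<in> B)" using less.prems(9) unfolding I'_def by blast
      show "\<forall>e\<in>ET'. e \<inter> I' = {} \<longrightarrow> g (Inr e) \<in> Sof (e \<inter> B \<noteq> {})"
        using less.prems(10) ev unfolding ET'_def I'_def by blast
    qed
    then obtain f' where f': "inj_on f' (expansion_vertices VT' ET')"
      "f' ` expansion_vertices VT' ET' \<subseteq> g ` items ET' I' \<union> V1 \<union> V2"
      "\<forall>e\<in>ET'. f' ` insert (Inr e) (Inl ` e) \<in> H" "f' (Inl z) = w"
      "\<forall>x\<in>VT' - I'. x \<noteq> z \<longrightarrow> f' (Inl x) \<in> Vof (x \<in> B)"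
      "\<forall>u\<in>I'. f' (Inl u) = g (Inl u)" "card ET' + 1 = card VT'" by blast
    have VTi: "VT = insert v VT'" unfolding VT'_def using v by blast
    have ETi: "ET = insert e ET'" unfolding ET'_def e_def using uv by blast
    have eE': "e \<notin> ET'" unfolding ET'_def by blast
    have vV': "v \<notin> VT'" unfolding VT'_def by blast
    have uV': "u \<in> VT'" unfolding VT'_def using uvd by blast
    have finE': "finite ET'" using finE unfolding ET'_def by simp
    have finV': "finite VT'" using fin unfolding VT'_def by simp
    have cardE: "card ET + 1 = card VT" using f'(7) ETi VTi eE' vV' finE' finV' by simp
    define X0 where "X0 = f' ` expansion_vertices VT' ET'"
    have finX0: "finite X0" unfolding X0_def expansion_vertices_def using finE' finV' by simp
    have cX0: "card X0 + 2 < 3 * k"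
    proof -
      have "card X0 \<le> card (expansion_vertices VT' ET')" unfolding X0_def
        using finE' finV' by (simp add: expansion_vertices_def card_image_le)
      also have "\<dots> \<le> card (Inl ` VT' :: ('a + 'a set) set) + card (Inr ` ET' :: ('a + 'a set) set)"
        unfolding expansion_vertices_def by (rule card_Un_le)
      also have "\<dots> \<le> card VT' + card ET'" using card_image_le finE' finV' by (metis add_mono)
      finally have "card X0 \<le> card VT' + card ET'" .
      then show ?thesis using f'(7) VTi vV' finV' less.prems(2) by simp
    qed
    define c where "c = (v \<in> B)"
    have colu: "u \<noteq> z \<Longrightarrow> (u \<in> B) = c" using less.prems(7) uv uvd v unfolding c_def by blast
    have fuV: "u \<notin> I \<Longrightarrow> f' (Inl u) \<in> Vof c"
    proof -
      assume uI: "u \<notin> I"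
      show ?thesis
      proof (cases "u = z")
        case True
        then show ?thesis using f'(4) w unfolding Vof_def by simp
      next
        case False
        then show ?thesis using f'(5) uV' uI colu unfolding I'_def by force
      qed
    qed
    obtain p q where pq: "p \<noteq> q" "p \<notin> X0" "q \<notin> X0" "p \<in> g ` items ET I \<union> V1 \<union> V2"
      "q \<in> g ` items ET I \<union> V1 \<union> V2" "{q, f' (Inl u), p} \<in> H"
      "v \<notin> I \<Longrightarrow> p \<in> Vof c" "v \<in> I \<Longrightarrow> p = g (Inl v)"
    proof -
      have VofU: "\<And>b. Vof b \<subseteq> V1 \<union> V2" unfolding Vof_def by auto
      have gnew: "g a \<notin> X0" if a: "a \<in> items ET I" "a \<notin> items ET' I'" "g a \<in> Sof b" for a b
      proof
        assume "g a \<in> X0"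
        then have "g a \<in> g ` items ET' I' \<union> V1 \<union> V2" using f'(2) unfolding X0_def by blast
        moreover have "g a \<notin> V1 \<union> V2" using SV[OF a(3)] .
        ultimately have "g a \<in> g ` items ET' I'" by blast
        then obtain a' where a': "a' \<in> items ET' I'" "g a = g a'" by blast
        then have "a = a'" using less.prems(8) it a(1) unfolding inj_on_def by blast
        then show False using a(2) a'(1) by simp
      qed
      have c3: "card X0 < 3 * k" using cX0 by simp
      have c3': "card (insert x X0) < 3 * k" for x using cX0 finX0 by (simp add: card_insert_if)
      consider (A) "v \<in> I" | (B) "v \<notin> I" "u \<in> I" | (C) "v \<notin> I" "u \<notin> I" by blast
      then show ?thesis
      proof cases
        case A
        have uI: "u \<notin> I"
        proof
          assume "u \<in> I"
          then have "{u, v} \<subseteq> I" using A by simp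
          moreover have "\<not> {u, v} \<subseteq> I" using bspec[OF less.prems(4)[unfolded independent_def] uv] .
          ultimately show False by contradiction
        qed
        have pS: "g (Inl v) \<in> Sof c" using less.prems(9) A unfolding c_def by blast
        have pit: "Inl v \<in> items ET I" "Inl v \<notin> items ET' I'" unfolding items_def I'_def using A by auto
        obtain q where q: "{f' (Inl u), q} \<in> Gof c" "q \<notin> X0" "q \<in> Vof c"
          using fresh[OF fuV[OF uI] finX0 c3] by blast
        show ?thesis
        proof (rule that[of "g (Inl v)" q])
          show "g (Inl v) \<noteq> q" using SV[OF pS] q(3) VofU by blast
          show "g (Inl v) \<notin> X0" by (rule gnew[OF pit pS])
          show "q \<notin> X0" by (rule q(2))
          show "g (Inl v) \<in> g ` items ET I \<union> V1 \<union> V2" using pit by blast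
          show "q \<in> g ` items ET I \<union> V1 \<union> V2" using q(3) VofU by blast
          have "insert (g (Inl v)) {f' (Inl u), q} \<in> H" by (rule linkof[OF pS q(1)])
          moreover have "{q, f' (Inl u), g (Inl v)} = insert (g (Inl v)) {f' (Inl u), q}" by blast
          ultimately show "{q, f' (Inl u), g (Inl v)} \<in> H" by simp
        qed (use A in auto)
      next
        case B
        have uz: "u \<noteq> z" using B less.prems(6) by blast
        have fu: "f' (Inl u) = g (Inl u)" using f'(6) B uvd unfolding I'_def by blast
        have sS: "g (Inl u) \<in> Sof c" using less.prems(9) B colu[OF uz] by force
        have wc: "w \<in> Vof c" using w unfolding Vof_def by simp
        obtain p where p: "{w, p} \<in> Gof c" "p \<notin> X0" "p \<in> Vof c"
          using fresh[OF wc finX0 c3] by blast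
        obtain q where q: "{p, q} \<in> Gof c" "q \<notin> insert p X0" "q \<in> Vof c"
          using fresh[OF p(3) _ c3'[of p]] finX0 by blast
        show ?thesis
        proof (rule that[of p q])
          show "p \<noteq> q" using q(2) by blast
          show "p \<notin> X0" "q \<notin> X0" using p(2) q(2) by auto
          show "p \<in> g ` items ET I \<union> V1 \<union> V2" using p(3) VofU by blast
          show "q \<in> g ` items ET I \<union> V1 \<union> V2" using q(3) VofU by blast
          have "insert (g (Inl u)) {p, q} \<in> H" by (rule linkof[OF sS q(1)])
          moreover have "{q, f' (Inl u), p} = insert (g (Inl u)) {p, q}" unfolding fu by blast
          ultimately show "{q, f' (Inl u), p} \<in> H" by simp
          show "p \<in> Vof c" by (rule p(3))
        qed (use B in auto)
      next
        case C
        have eI: "e \<inter> I = {}" using C unfolding e_def by blast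
        have ec: "(e \<inter> B \<noteq> {}) = c"
        proof (cases "u = z")
          case True
          then show ?thesis using zB unfolding e_def c_def by auto
        next
          case False
          then show ?thesis using colu unfolding e_def c_def by auto
        qed
        have qS: "g (Inr e) \<in> Sof c" using less.prems(10) eI uv ec unfolding e_def by force
        have qit: "Inr e \<in> items ET I" "Inr e \<notin> items ET' I'" unfolding items_def
          using eI uv eE' unfolding e_def by auto
        obtain p where p: "{f' (Inl u), p} \<in> Gof c" "p \<notin> X0" "p \<in> Vof c"
          using fresh[OF fuV[OF C(2)] finX0 c3] by blast
        show ?thesis
        proof (rule that[of p "g (Inr e)"])
          show "p \<noteq> g (Inr e)" using SV[OF qS] p(3) VofU by blast
          show "g (Inr e) \<notin> X0" by (rule gnew[OF qit qS])
          show "p \<notin> X0" by (rule p(2))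
          show "g (Inr e) \<in> g ` items ET I \<union> V1 \<union> V2" using qit by blast
          show "p \<in> g ` items ET I \<union> V1 \<union> V2" using p(3) VofU by blast
          have "insert (g (Inr e)) {f' (Inl u), p} \<in> H" by (rule linkof[OF qS p(1)])
          then show "{g (Inr e), f' (Inl u), p} \<in> H" by simp
          show "p \<in> Vof c" by (rule p(3))
        qed (use C in auto)
      qed
    qed
    define f where "f = f'(Inl v := p, Inr e := q)"
    have EVi: "expansion_vertices VT ET = insert (Inl v) (insert (Inr e) (expansion_vertices VT' ET'))"
      unfolding expansion_vertices_def VTi ETi by auto
    have nin: "Inl v \<notin> expansion_vertices VT' ET'" "Inr e \<notin> expansion_vertices VT' ET'"
      unfolding expansion_vertices_def using vV' eE' by auto
    have fe: "\<And>x. x \<in> expansion_vertices VT' ET' \<Longrightarrow> f x = f' x"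
      unfolding f_def using nin by auto
    have fimg: "f ` expansion_vertices VT' ET' = X0" unfolding X0_def using fe by auto
    show ?thesis
    proof (intro exI[of _ f] conjI)
      show "inj_on f (expansion_vertices VT ET)"
        unfolding EVi using nin f'(1) fe fimg pq(1-3) unfolding f_def
        by (auto simp: inj_on_def)
      have X0s: "X0 \<subseteq> g ` items ET I \<union> V1 \<union> V2" using f'(2) it unfolding X0_def by blast
      show "f ` expansion_vertices VT ET \<subseteq> g ` items ET I \<union> V1 \<union> V2"
        unfolding EVi using fimg X0s pq(4,5) unfolding f_def by auto
      show "\<forall>e'\<in>ET. f ` insert (Inr e') (Inl ` e') \<in> H"
      proof
        fix e' assume "e' \<in> ET"
        then consider "e' = e" | "e' \<in> ET'" using ETi by blast
        then show "f ` insert (Inr e') (Inl ` e') \<in> H"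
        proof cases
          case 1
          have "f ` insert (Inr e') (Inl ` e') = {q, f' (Inl u), p}"
            unfolding 1 e_def f_def using nin uvd uV' by (auto simp: expansion_vertices_def)
          then show ?thesis using pq(6) by simp
        next
          case 2
          then have "insert (Inr e') (Inl ` e') \<subseteq> expansion_vertices VT' ET'"
            using T' unfolding is_tree_def graph_on_def expansion_vertices_def by blast
          then have "f ` insert (Inr e') (Inl ` e') = f' ` insert (Inr e') (Inl ` e')"
            using fe by (meson image_cong subsetD)
          then show ?thesis using f'(3) 2 by simp
        qed
      qed
      show "f (Inl z) = w" unfolding f_def using f'(4) v(2) by simp
      show "\<forall>x\<in>VT - I. x \<noteq> z \<longrightarrow> f (Inl x) \<in> Vof (x \<in> B)"
        using f'(5) pq(7) unfolding f_def c_def VTi I'_def by auto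
      show "\<forall>u\<in>I. f (Inl u) = g (Inl u)"
        using f'(6) pq(8) unfolding f_def I'_def by auto
      show "card ET + 1 = card VT" by (rule cardE)
    qed
  qed
qed

end



lemma two_hall:
  assumes fS: "finite S1" "finite S2" and cS: "card S1 = t" "card S2 = t" and ne: "S1 \<noteq> S2"
    and fA: "finite A1" "finite A2" and dA: "A1 \<inter> A2 = {}" and cA: "card A1 + card A2 = t + 1"
    and a1: "card A1 \<ge> 1" and a2: "card A2 \<ge> 1"
  shows "\<exists>g. inj_on g (A1 \<union> A2) \<and> g ` A1 \<subseteq> S1 \<and> g ` A2 \<subseteq> S2"
proof -
  have "\<not> S2 \<subseteq> S1"
  proof
    assume "S2 \<subseteq> S1"
    then have "S2 = S1" using card_subset_eq[OF fS(1)] cS by simp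
    then show False using ne by simp
  qed
  then obtain s2 where s2: "s2 \<in> S2" "s2 \<notin> S1" by blast
  have "card (S2 - {s2}) = t - 1" using s2 cS fS by simp
  moreover have "card A2 - 1 \<le> t - 1" using cA a1 by simp
  ultimately obtain P2' where P2': "P2' \<subseteq> S2 - {s2}" "card P2' = card A2 - 1"
    using obtain_subset_with_card_n by metis
  define P2 where "P2 = insert s2 P2'"
  have finP2': "finite P2'" using P2' fS(2) finite_subset by blast
  have s2P: "s2 \<notin> P2'" using P2' by blast
  have cP2: "card P2 = card A2" unfolding P2_def using finP2' s2P P2'(2) a2 by simp
  have P2S: "P2 \<subseteq> S2" unfolding P2_def using P2' s2 by blast
  have "S1 \<inter> P2 \<subseteq> P2'" unfolding P2_def using s2 by blast
  then have "card (S1 \<inter> P2) \<le> card A2 - 1" using P2'(2) finP2' card_mono by metis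
  moreover have "card (S1 - P2) = card S1 - card (S1 \<inter> P2)"
    using fS(1) by (metis card_Diff_subset_Int finite_Int)
  ultimately have "card A1 \<le> card (S1 - P2)" using cS cA a2 by linarith
  then obtain P1 where P1: "P1 \<subseteq> S1 - P2" "card P1 = card A1"
    using obtain_subset_with_card_n by metis
  have finP1: "finite P1" using P1 fS(1) finite_subset by blast
  have finP2: "finite P2" unfolding P2_def using finP2' by simp
  obtain g1 where g1: "bij_betw g1 A1 P1" using finite_same_card_bij[OF fA(1) finP1] P1(2) by metis
  obtain g2 where g2: "bij_betw g2 A2 P2" using finite_same_card_bij[OF fA(2) finP2] cP2 by metis
  define g where "g a = (if a \<in> A2 then g2 a else g1 a)" for a
  have gA1: "g ` A1 = P1" using g1 dA unfolding g_def bij_betw_def by (auto simp: image_iff)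
  have gA2: "g ` A2 = P2" using g2 unfolding g_def bij_betw_def by (auto simp: image_iff)
  have i1: "inj_on g A1" using g1 dA unfolding g_def bij_betw_def inj_on_def by auto
  have i2: "inj_on g A2" using g2 unfolding g_def bij_betw_def inj_on_def by auto
  have "inj_on g (A1 \<union> A2)"
    using i1 i2 gA1 gA2 P1(1) by (auto simp: inj_on_Un)
  then show ?thesis using gA1 gA2 P1 P2S by blast
qed




lemma finite_edges: "graph_on VT ET \<Longrightarrow> finite ET"
proof -
  assume g: "graph_on VT ET"
  have "ET \<subseteq> Pow VT" using g unfolding graph_on_def by blast
  then show ?thesis using g unfolding graph_on_def by (meson finite_Pow_iff finite_subset)
qed

lemma sigma_props:
  assumes g: "graph_on VT ET"
  shows "\<exists>I. I \<subseteq> VT \<and> independent ET I \<and> card I + edges_outside ET I = sigma VT ET"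
    and "J \<subseteq> VT \<Longrightarrow> independent ET J \<Longrightarrow> sigma VT ET \<le> card J + edges_outside ET J"
proof -
  have fin: "finite VT" using g unfolding graph_on_def by simp
  have eq: "{card I + edges_outside ET I | I. I \<subseteq> VT \<and> independent ET I}
     = (\<lambda>I. card I + edges_outside ET I) ` {I. I \<subseteq> VT \<and> independent ET I}" by blast
  have fS: "finite {I. I \<subseteq> VT \<and> independent ET I}" using fin by simp
  have ind0: "independent ET {}" using g unfolding independent_def graph_on_def by fastforce
  have ne: "{I. I \<subseteq> VT \<and> independent ET I} \<noteq> {}" using ind0 by blast
  have "sigma VT ET \<in> (\<lambda>I. card I + edges_outside ET I) ` {I. I \<subseteq> VT \<and> independent ET I}"
    unfolding sigma_def eq using fS ne by (intro Min_in) auto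
  then show "\<exists>I. I \<subseteq> VT \<and> independent ET I \<and> card I + edges_outside ET I = sigma VT ET" by force
  show "J \<subseteq> VT \<Longrightarrow> independent ET J \<Longrightarrow> sigma VT ET \<le> card J + edges_outside ET J"
    unfolding sigma_def eq using fS by (intro Min_le) auto
qed

lemma deg2:
  assumes T: "is_tree VT ET" and I: "I \<subseteq> VT" "independent ET I" and s2: "sigma VT ET \<ge> 2"
  shows "\<exists>z\<in>VT - I. \<exists>y0 y1. y0 \<noteq> y1 \<and> {z, y0} \<in> ET \<and> {z, y1} \<in> ET"
proof (rule ccontr)
  assume "\<not> ?thesis"
  then have nz: "\<And>x a b. x \<in> VT \<Longrightarrow> x \<notin> I \<Longrightarrow> {x, a} \<in> ET \<Longrightarrow> {x, b} \<in> ET \<Longrightarrow> a = b" by blast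
  have g: "graph_on VT ET" and con: "connected_graph VT ET" using T unfolding is_tree_def by auto
  have finE: "finite ET" by (rule finite_edges[OF g])
  have indI: "q \<notin> I" if pq: "{p, q} \<in> ET" "p \<in> I" for p q
  proof
    assume "q \<in> I"
    then have "{p, q} \<subseteq> I" using pq(2) by simp
    then show False using bspec[OF I(2)[unfolded independent_def] pq(1)] by contradiction
  qed
  have "\<exists>J. J \<subseteq> VT \<and> independent ET J \<and> card J + edges_outside ET J \<le> 1"
  proof (cases "ET = {}")
    case True
    have "independent ET {}" using True unfolding independent_def by simp
    then show ?thesis using True unfolding edges_outside_def by (intro exI[of _ "{}"]) auto
  next
    case False
    then obtain e where e: "e \<in> ET" by blast
    have "card e = 2" using g e unfolding graph_on_def by blast
    then obtain a b where ab: "e = {a, b}" "a \<noteq> b" by (auto simp: card_2_iff)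
    have abV: "a \<in> VT" "b \<in> VT" using edge_card[OF g] e ab by auto
    show ?thesis
    proof (cases "a \<in> I \<or> b \<in> I")
      case True
      obtain c d where cd: "{c, d} \<in> ET" "c \<in> I"
      proof (cases "a \<in> I")
        case True then show ?thesis using that e ab by blast
      next
        case False then have "b \<in> I" using \<open>a \<in> I \<or> b \<in> I\<close> by simp
        moreover have "{b, a} \<in> ET" using e ab by (simp add: insert_commute)
        ultimately show ?thesis using that by blast
      qed
      have clos: "(c, x) \<in> {(p, q). {p, q} \<in> ET}\<^sup>* \<Longrightarrow> x = c \<or> {c, x} \<in> ET" for x
      proof (induction rule: rtrancl_induct)
        case base then show ?case by simp
      next
        case (step y x')
        have yx: "{y, x'} \<in> ET" using step(2) by simp
        show ?case
        proof (cases "y = c")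
          case True then show ?thesis using yx by simp
        next
          case False
          then have cy: "{c, y} \<in> ET" using step(3) by simp
          then have "y \<notin> I" "y \<in> VT" using indI cd(2) edge_card[OF g cy] by auto
          moreover have "{y, c} \<in> ET" using cy by (simp add: insert_commute)
          ultimately have "x' = c" using nz yx by blast
          then show ?thesis by simp
        qed
      qed
      have cV: "c \<in> VT" using edge_card[OF g cd(1)] by simp
      have nb: "x \<in> VT \<Longrightarrow> x = c \<or> {c, x} \<in> ET" for x
        using clos[OF con[unfolded connected_graph_def, rule_format, OF cV]] by simp
      have ind: "independent ET {c}" unfolding independent_def
      proof (intro ballI notI)
        fix e' assume "e' \<in> ET" "e' \<subseteq> {c}"
        moreover then have "card e' \<le> card {c}" by (intro card_mono) auto
        ultimately show False using g unfolding graph_on_def by fastforce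
      qed
      have "{e \<in> ET. e \<inter> {c} = {}} = {}"
      proof (rule ccontr)
        assume "{e \<in> ET. e \<inter> {c} = {}} \<noteq> {}"
        then obtain e' where e': "e' \<in> ET" "c \<notin> e'" by blast
        have "card e' = 2" using g e' unfolding graph_on_def by blast
        then obtain p q where pq: "e' = {p, q}" "p \<noteq> q" by (auto simp: card_2_iff)
        have pqV: "p \<in> VT" "q \<in> VT" using edge_card[OF g] e' pq by auto
        have "p \<noteq> c" "q \<noteq> c" using e' pq by auto
        then have cp: "{c, p} \<in> ET" "{c, q} \<in> ET" using nb pqV by auto
        have "p \<notin> I" using indI cd(2) cp(1) by blast
        moreover have "{p, c} \<in> ET" using cp by (simp add: insert_commute)
        ultimately have "q = c" using nz pqV e' pq by blast
        then show False using \<open>q \<noteq> c\<close> by simp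
      qed
      then have "edges_outside ET {c} = 0" unfolding edges_outside_def by (simp only: card.empty)
      then show ?thesis using ind cV by (intro exI[of _ "{c}"]) auto
    next
      case False
      have clos: "(a, x) \<in> {(p, q). {p, q} \<in> ET}\<^sup>* \<Longrightarrow> x \<in> {a, b}" for x
      proof (induction rule: rtrancl_induct)
        case base then show ?case by simp
      next
        case (step y x')
        have yx: "{y, x'} \<in> ET" using step(2) by simp
        have eab: "{a, b} \<in> ET" "{b, a} \<in> ET" using e ab by (auto simp: insert_commute)
        show ?case
        proof (cases "y = a")
          case True then show ?thesis using nz[of a x' b] yx eab abV False by auto
        next
          case F2: False
          then have "y = b" using step(3) by simp
          then show ?thesis using nz[of b x' a] yx eab abV False by auto
        qed
      qed
      have VT: "VT \<subseteq> {a, b}" using clos[OF con[unfolded connected_graph_def, rule_format, OF abV(1)]] by blast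
      have "ET \<subseteq> {{a, b}}"
      proof
        fix e' assume e': "e' \<in> ET"
        then have "e' \<subseteq> {a, b}" "card e' = 2" using g VT unfolding graph_on_def by auto
        moreover have "card {a, b} = 2" using ab(2) by simp
        ultimately have "e' = {a, b}" using card_subset_eq[of "{a, b}" e'] by simp
        then show "e' \<in> {{a, b}}" by simp
      qed
      then have "card ET \<le> card {{a, b}}" by (intro card_mono) auto
      then have "card ET \<le> 1" by simp
      moreover have "independent ET {}" using g unfolding independent_def graph_on_def by fastforce
      ultimately show ?thesis unfolding edges_outside_def by (intro exI[of _ "{}"]) auto
    qed
  qed
  then obtain J where J: "J \<subseteq> VT" "independent ET J" "card J + edges_outside ET J \<le> 1" by blast
  have "sigma VT ET \<le> card J + edges_outside ET J" by (rule sigma_props(2)[OF g J(1) J(2)])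
  then have "sigma VT ET \<le> 1" using J(3) by linarith
  then show False using s2 by simp
qed




lemma branch:
  assumes T: "is_tree VT ET" and z0: "{z, y0} \<in> ET" and z1: "{z, y1} \<in> ET" and y01: "y0 \<noteq> y1"
    and Bdef: "B = {x. (y0, x) \<in> {(p, q). {p, q} \<in> {e \<in> ET. z \<notin> e}}\<^sup>*}"
  shows "y0 \<in> B" "z \<notin> B" "y1 \<notin> B" "\<forall>x y. {x, y} \<in> ET \<longrightarrow> x \<noteq> z \<longrightarrow> y \<noteq> z \<longrightarrow> (x \<in> B \<longleftrightarrow> y \<in> B)"
proof -
  let ?E = "{e \<in> ET. z \<notin> e}"
  let ?R = "{(p, q). {p, q} \<in> ?E}"
  have g: "graph_on VT ET" and nc: "\<not> has_cycle ET" using T unfolding is_tree_def by auto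
  have zy0: "z \<noteq> y0" using edge_card[OF g z0] by simp
  show "y0 \<in> B" unfolding Bdef by simp
  show "z \<notin> B"
  proof
    assume "z \<in> B"
    then have "(y0, z) \<in> ?R\<^sup>*" unfolding Bdef by simp
    then show False
    proof (cases rule: rtranclE)
      case base then show False using zy0 by simp
    next
      case (step y) then show False by simp
    qed
  qed
  show "\<forall>x y. {x, y} \<in> ET \<longrightarrow> x \<noteq> z \<longrightarrow> y \<noteq> z \<longrightarrow> (x \<in> B \<longleftrightarrow> y \<in> B)"
  proof (intro allI impI)
    fix x y assume xy: "{x, y} \<in> ET" "x \<noteq> z" "y \<noteq> z"
    then have r1: "(x, y) \<in> ?R" and r2: "(y, x) \<in> ?R" by (auto simp: insert_commute)
    show "x \<in> B \<longleftrightarrow> y \<in> B"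
    proof
      assume "x \<in> B" then show "y \<in> B" unfolding Bdef using r1 by (simp add: rtrancl_into_rtrancl)
    next
      assume "y \<in> B" then show "x \<in> B" unfolding Bdef using r2 by (simp add: rtrancl_into_rtrancl)
    qed
  qed
  show "y1 \<notin> B"
  proof
    assume "y1 \<in> B"
    then have "(y0, y1) \<in> ?R\<^sup>*" unfolding Bdef by simp
    then obtain cs where cs: "cs \<noteq> []" "hd cs = y0" "last cs = y1" "distinct cs" "wk ?E cs"
      using walk_of_rtrancl[of y0 y1 ?E] by blast
    have l2: "length cs \<ge> 2"
    proof (rule ccontr)
      assume "\<not> length cs \<ge> 2"
      then have "hd cs = last cs" using cs(1) by (cases cs) (auto simp: not_le)
      then show False using cs y01 by simp
    qed
    have zn: "z \<notin> set cs"
    proof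
      assume "z \<in> set cs"
      then obtain j where j: "j < length cs" "cs ! j = z" by (auto simp: in_set_conv_nth)
      show False
      proof (cases "j < length cs - 1")
        case True
        then have "{cs ! j, cs ! (j + 1)} \<in> ?E" using cs(5) unfolding wk_def by blast
        then show False using j by simp
      next
        case False
        then have "j - 1 < length cs - 1" "j - 1 + 1 = j" using j l2 by auto
        then have "{cs ! (j - 1), cs ! j} \<in> ?E" using cs(5) unfolding wk_def by metis
        then show False using j by simp
      qed
    qed
    have "has_cycle ET" unfolding has_cycle_wk
    proof (intro exI conjI)
      show "3 \<le> length (z # cs)" using l2 by simp
      show "distinct (z # cs)" using cs(4) zn by simp
      show "wk ET (z # cs)" using wk_Cons[OF wk_mono[OF _ cs(5)] cs(1)] z0 cs(2) by blast
      show "{last (z # cs), hd (z # cs)} \<in> ET" using cs(1,3) z1 by (simp add: insert_commute)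
    qed
    then show False using nc by simp
  qed
qed




theorem proposition2p8:
  fixes VT :: "'a set" and ET :: "'a set set" and k :: nat
    and V :: "'b set" and H :: "'b set set"
    and S1 S2 V1 V2 :: "'b set" and G1 G2 :: "'b set set"
  assumes tree: "is_tree VT ET" and k: "card VT = k"
    and HV: "finite V" "hypergraph3_on V H"
    and S: "S1 \<subseteq> V" "S2 \<subseteq> V" "S1 \<noteq> S2"
       "card S1 = sigma VT ET - 1" "card S2 = sigma VT ET - 1"
    and Vi: "V1 \<subseteq> V - (S1 \<union> S2)" "V2 \<subseteq> V - (S1 \<union> S2)" "V1 \<inter> V2 \<noteq> {}"
    and G: "graph_on V1 G1" "graph_on V2 G2"
    and deg: "\<forall>v\<in>V1. degree G1 v \<ge> 3 * k" "\<forall>v\<in>V2. degree G2 v \<ge> 3 * k"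
    and lnk: "\<forall>v\<in>S1. G1 \<subseteq> link H v" "\<forall>v\<in>S2. G2 \<subseteq> link H v"
  shows "contains_copy V H (expansion_vertices VT ET) (expansion_edges ET)"
proof -
  interpret setting H S1 S2 V1 V2 G1 G2 k
    by unfold_locales (use Vi G deg lnk in auto)
  have g: "graph_on VT ET" and fin: "finite VT" using tree unfolding is_tree_def graph_on_def by auto
  have finE: "finite ET" by (rule finite_edges[OF g])
  obtain I where I: "I \<subseteq> VT" "independent ET I" "card I + edges_outside ET I = sigma VT ET"
    using sigma_props(1)[OF g] by blast
  have finI: "finite I" using I(1) fin finite_subset by blast
  have finS: "finite S1" "finite S2" using S(1,2) HV(1) finite_subset by blast+
  have s2: "sigma VT ET \<ge> 2"
  proof (rule ccontr)
    assume "\<not> sigma VT ET \<ge> 2"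
    then have "sigma VT ET - 1 = 0" by simp
    then have "S1 = {}" "S2 = {}" using S(4,5) finS by auto
    then show False using S(3) by simp
  qed
  obtain z y0 y1 where z: "z \<in> VT" "z \<notin> I" "y0 \<noteq> y1" "{z, y0} \<in> ET" "{z, y1} \<in> ET"
    using deg2[OF tree I(1,2) s2] by blast
  define B where "B = {x. (y0, x) \<in> {(p, q). {p, q} \<in> {e \<in> ET. z \<notin> e}}\<^sup>*}"
  note br = branch[OF tree z(4) z(5) z(3) B_def]
  define side where "side a = (case a of Inl u \<Rightarrow> u \<in> B | Inr e \<Rightarrow> e \<inter> B \<noteq> {})" for a :: "'a + 'a set"
  define A2 where "A2 = {a \<in> items ET I. side a}"
  define A1 where "A1 = {a \<in> items ET I. \<not> side a}"
  have finIt: "finite (items ET I)" unfolding items_def using finI finE by simp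
  have cIt: "card (items ET I) = sigma VT ET"
  proof -
    have "card (items ET I) = card (Inl ` I :: ('a + 'a set) set) + card (Inr ` {e \<in> ET. e \<inter> I = {}} :: ('a + 'a set) set)"
      unfolding items_def using finI finE by (intro card_Un_disjoint) auto
    also have "\<dots> = card I + card {e \<in> ET. e \<inter> I = {}}"
      by (simp add: card_image)
    finally show ?thesis using I(3) unfolding edges_outside_def by simp
  qed
  have AU: "items ET I = A1 \<union> A2" "A1 \<inter> A2 = {}" unfolding A1_def A2_def by auto
  have finA: "finite A1" "finite A2" using finIt AU(1) by auto
  have cA: "card A1 + card A2 = (sigma VT ET - 1) + 1"
    using card_Un_disjoint[OF finA AU(2)] AU(1) cIt s2 by simp
  have y0B: "y0 \<in> B" and y1B: "y1 \<notin> B" and zB: "z \<notin> B" using br by auto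
  have "A2 \<noteq> {}"
  proof (cases "y0 \<in> I")
    case True
    then have "Inl y0 \<in> A2" unfolding A2_def items_def side_def using y0B by auto
    then show ?thesis by blast
  next
    case False
    then have "Inr {z, y0} \<in> A2" unfolding A2_def items_def side_def using y0B z by auto
    then show ?thesis by blast
  qed
  then have a2: "card A2 \<ge> 1" using finA(2) by (simp add: Suc_leI card_gt_0_iff)
  have "A1 \<noteq> {}"
  proof (cases "y1 \<in> I")
    case True
    then have "Inl y1 \<in> A1" unfolding A1_def items_def side_def using y1B by auto
    then show ?thesis by blast
  next
    case False
    then have "Inr {z, y1} \<in> A1" unfolding A1_def items_def side_def using y1B zB z by auto
    then show ?thesis by blast
  qed
  then have a1: "card A1 \<ge> 1" using finA(1) by (simp add: Suc_leI card_gt_0_iff)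
  obtain gg where gg: "inj_on gg (A1 \<union> A2)" "gg ` A1 \<subseteq> S1" "gg ` A2 \<subseteq> S2"
    using two_hall[OF finS S(4,5) S(3) finA AU(2) cA a1 a2] by blast
  obtain w where w: "w \<in> V1" "w \<in> V2" using Vi(3) by blast
  have ggI: "\<forall>u\<in>I. gg (Inl u) \<in> Sof (u \<in> B)"
  proof
    fix u assume u: "u \<in> I"
    show "gg (Inl u) \<in> Sof (u \<in> B)"
    proof (cases "u \<in> B")
      case True
      then have "Inl u \<in> A2" unfolding A2_def items_def side_def using u by auto
      then show ?thesis using gg(3) True unfolding Sof_def by auto
    next
      case False
      then have "Inl u \<in> A1" unfolding A1_def items_def side_def using u by auto
      then show ?thesis using gg(2) False unfolding Sof_def by auto
    qed
  qed
  have ggE: "\<forall>e\<in>ET. e \<inter> I = {} \<longrightarrow> gg (Inr e) \<in> Sof (e \<inter> B \<noteq> {})"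
  proof (intro ballI impI)
    fix e assume e: "e \<in> ET" "e \<inter> I = {}"
    show "gg (Inr e) \<in> Sof (e \<inter> B \<noteq> {})"
    proof (cases "e \<inter> B \<noteq> {}")
      case True
      then have "Inr e \<in> A2" unfolding A2_def items_def side_def using e by auto
      then show ?thesis using gg(3) True unfolding Sof_def by auto
    next
      case False
      then have "Inr e \<in> A1" unfolding A1_def items_def side_def using e by auto
      then show ?thesis using gg(2) False unfolding Sof_def by auto
    qed
  qed
  have inj: "inj_on gg (items ET I)" using gg(1) AU(1) by simp
  obtain f where f: "inj_on f (expansion_vertices VT ET)"
     "f ` expansion_vertices VT ET \<subseteq> gg ` items ET I \<union> V1 \<union> V2"
     "\<forall>e\<in>ET. f ` insert (Inr e) (Inl ` e) \<in> H"
    using core[OF tree _ I(1,2) z(1,2) w br(2) br(4) inj ggI ggE] k by blast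
  have "gg ` items ET I \<subseteq> V" using gg(2,3) AU(1) S(1,2) by blast
  moreover have "V1 \<union> V2 \<subseteq> V" using Vi by blast
  ultimately have fV: "f ` expansion_vertices VT ET \<subseteq> V" using f(2) by blast
  show ?thesis unfolding contains_copy_def expansion_edges_def
    using f(1,3) fV by blast
qed


end
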